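(* Let $d\in\{2,3\}$, let $D\in\mathbb{R}^{d\times m}$ and consider a TPS warp with control centers $c_1,\dots,c_l\in\mathbb{R}^d$ and parameter $\lambda$. Let $R\in\mathbb{R}^{d\times d}$ be a rotation and $t\in\mathbb{R}^d$, and apply the same rigid transformation to the datum shape and to the control centers: $D'=RD+t\mathbf{1}^{\top}$ and $c_j'=Rc_j+t$. Denote by $\mathcal{B}(\cdot)$, $Z$ the TPS feature lifting and regularization matrix built from $c_1,\dots,c_l$, and by $\mathcal{B}'(\cdot)$, $Z'$ those built from $c_1',\dots,c_l'$ (same $\lambda$). Then $\mathcal{B}'(D')=\mathcal{B}(D)$ and $Z'=Z$.
   Context: TPS construction: kernel $\phi(r)=r^2\log(r^2)$ ($d=2$) or $\phi(r)=-|r|$ ($d=3$); $K_\lambda\in\mathbb{R}^{l\times l}$ has diagonal entries $\lambda$ and off-diagonal entries $\phi(\|c_j-c_k\|)$; $\tilde{C}=[\tilde{c}_1,\dots,\tilde{c}_l]$ with $\tilde{c}_j=[c_j^{\top},1]^{\top}$; $K_\lambda$ and $\tilde{C}K_\lambda^{-1}\tilde{C}^{\top}$ are assumed invertible; $\bar{\mathcal{E}}_\lambda=K_\lambda^{-1}-K_\lambda^{-1}\tilde{C}^{\top}(\tilde{C}K_\lambda^{-1}\tilde{C}^{\top})^{-1}\tilde{C}K_\lambda^{-1}$ (bending energy matrix, positive semidefinite in the paper's setting) and $\mathcal{E}_\lambda=\begin{bmatrix}\bar{\mathcal{E}}_\lambda\\ (\tilde{C}K_\lambda^{-1}\tilde{C}^{\top})^{-1}\tilde{C}K_\lambda^{-1}\end{bmatrix}$;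 for $p\in\mathbb{R}^d$, $\beta(p)=\mathcal{E}_\lambda^{\top}\begin{bmatrix}\phi_p\\ \tilde{p}\end{bmatrix}$ with $\phi_p=[\phi(\|p-c_j\|)]_{j=1}^l$ and $\tilde{p}=[p^{\top},1]^{\top}$; $\mathcal{B}(D)=[\beta(p_1),\dots,\beta(p_m)]$ for $D=[p_1,\dots,p_m]$; $Z=\sqrt{\bar{\mathcal{E}}_\lambda}$ is the symmetric positive semidefinite square root. $\mathbf{1}\in\mathbb{R}^m$ is the all-ones vector. *)

theory Defs
  imports "HOL-Analysis.Analysis"
begin

text \<open>Dimension d = CARD('d) (2 or 3);
  control centers indexed by the finite type 'l; data points by the finite type 'm.
  The homogeneous coordinate index set {1..d+1} is rendered as 'd option
  (None = the appended coordinate 1); the stacked index set of length l+d+1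
  is rendered as 'l + 'd option.\<close>

definition tps_phi :: "nat \<Rightarrow> real \<Rightarrow> real" where
  "tps_phi d r = (if d = 2 then r\<^sup>2 * ln (r\<^sup>2) else - \<bar>r\<bar>)"

definition tps_K :: "('l::finite \<Rightarrow> real^'d::finite) \<Rightarrow> real \<Rightarrow> real^'l^'l" where
  "tps_K c lam = (\<chi> j k. if j = k then lam else tps_phi CARD('d) (norm (c j - c k)))"

definition tps_Ctil :: "('l::finite \<Rightarrow> real^'d::finite) \<Rightarrow> real^'l^('d option)" where
  "tps_Ctil c = (\<chi> i j. case i of None \<Rightarrow> 1 | Some a \<Rightarrow> c j $ a)"

definition tps_Ebar :: "('l::finite \<Rightarrow> real^'d::finite) \<Rightarrow> real \<Rightarrow> real^'l^'l" where
  "tps_Ebar c lam =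
     (let Ki = matrix_inv (tps_K c lam); Ct = tps_Ctil c in
      Ki - Ki ** transpose Ct ** matrix_inv (Ct ** Ki ** transpose Ct) ** Ct ** Ki)"

definition tps_Elow :: "('l::finite \<Rightarrow> real^'d::finite) \<Rightarrow> real \<Rightarrow> real^'l^('d option)" where
  "tps_Elow c lam =
     (let Ki = matrix_inv (tps_K c lam); Ct = tps_Ctil c in
      matrix_inv (Ct ** Ki ** transpose Ct) ** Ct ** Ki)"

definition tps_E :: "('l::finite \<Rightarrow> real^'d::finite) \<Rightarrow> real \<Rightarrow> real^'l^('l + 'd option)" where
  "tps_E c lam = (\<chi> i j. case i of Inl a \<Rightarrow> tps_Ebar c lam $ a $ j
                                  | Inr b \<Rightarrow> tps_Elow c lam $ b $ j)"

definition tps_beta :: "('l::finite \<Rightarrow> real^'d::finite) \<Rightarrow> real \<Rightarrow> real^'d \<Rightarrow> real^'l" where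
  "tps_beta c lam p = transpose (tps_E c lam) *v
     (\<chi> i. case i of Inl j \<Rightarrow> tps_phi CARD('d) (norm (p - c j))
                   | Inr None \<Rightarrow> 1
                   | Inr (Some a) \<Rightarrow> p $ a)"

definition tps_B :: "('l::finite \<Rightarrow> real^'d::finite) \<Rightarrow> real \<Rightarrow> real^'m::finite^'d \<Rightarrow> real^'m^'l" where
  "tps_B c lam D = (\<chi> j k. tps_beta c lam (column k D) $ j)"

definition psd_sqrt :: "real^'n::finite^'n \<Rightarrow> real^'n^'n" where
  "psd_sqrt A = (THE Z. transpose Z = Z \<and> (\<forall>x. 0 \<le> x \<bullet> (Z *v x)) \<and> Z ** Z = A)"

definition tps_Z :: "('l::finite \<Rightarrow> real^'d::finite) \<Rightarrow> real \<Rightarrow> real^'l^'l" where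
  "tps_Z c lam = psd_sqrt (tps_Ebar c lam)"

end

theory Submission
  imports Defs
begin

lemma minv_unique:
  fixes A :: "real^'n::finite^'n" and B :: "real^'n^'n"
  assumes "A ** B = mat 1" "B ** A = mat 1"
  shows "matrix_inv A = B"
proof -
  have inv: "invertible A" using assms unfolding invertible_def by blast
  have "A ** matrix_inv A = mat 1 \<and> matrix_inv A ** A = mat 1"
    unfolding matrix_inv_def by (rule someI_ex) (use inv invertible_def in blast)
  hence "A ** matrix_inv A = mat 1" by blast
  have "B = B ** (A ** matrix_inv A)" using \<open>A ** matrix_inv A = mat 1\<close> by simp
  also have "\<dots> = (B ** A) ** matrix_inv A" by (simp add: matrix_mul_assoc)
  also have "\<dots> = matrix_inv A" using assms by simp
  finally show ?thesis by simp
qed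

lemma minv_props:
  fixes M :: "real^'n::finite^'n"
  assumes "invertible M"
  shows "M ** matrix_inv M = mat 1" "matrix_inv M ** M = mat 1"
proof -
  have "M ** matrix_inv M = mat 1 \<and> matrix_inv M ** M = mat 1"
    unfolding matrix_inv_def by (rule someI_ex) (use assms invertible_def in blast)
  thus "M ** matrix_inv M = mat 1" "matrix_inv M ** M = mat 1" by auto
qed

lemma minv_conj:
  fixes M :: "real^'n::finite^'n" and A Ai :: "real^'n^'n"
  assumes "invertible M" "A ** Ai = mat 1" "Ai ** A = mat 1"
  shows "matrix_inv (A ** M ** transpose A) = transpose Ai ** matrix_inv M ** Ai"
proof (rule minv_unique)
  have t1: "transpose A ** transpose Ai = mat 1"
    by (metis assms(3) matrix_transpose_mul transpose_mat)
  have t2: "transpose Ai ** transpose A = mat 1"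
    by (metis assms(2) matrix_transpose_mul transpose_mat)
  note mi = minv_props[OF assms(1)]
  have "A ** M ** transpose A ** (transpose Ai ** matrix_inv M ** Ai)
      = A ** M ** (transpose A ** transpose Ai) ** matrix_inv M ** Ai"
    by (simp add: matrix_mul_assoc)
  also have "\<dots> = A ** (M ** matrix_inv M) ** Ai" by (simp add: t1 matrix_mul_assoc)
  also have "\<dots> = mat 1" by (simp add: mi assms)
  finally show "A ** M ** transpose A ** (transpose Ai ** matrix_inv M ** Ai) = mat 1" .
  have "transpose Ai ** matrix_inv M ** Ai ** (A ** M ** transpose A)
      = transpose Ai ** matrix_inv M ** (Ai ** A) ** M ** transpose A"
    by (simp add: matrix_mul_assoc)
  also have "\<dots> = transpose Ai ** (matrix_inv M ** M) ** transpose A" by (simp add: assms matrix_mul_assoc)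
  also have "\<dots> = mat 1" by (simp add: mi t2)
  finally show "transpose Ai ** matrix_inv M ** Ai ** (A ** M ** transpose A) = mat 1" .
qed

lemma sum_option_UNIV:
  fixes f :: "'a::finite option \<Rightarrow> 'b::comm_monoid_add"
  shows "sum f UNIV = f None + (\<Sum>a\<in>UNIV. f (Some a))"
  by (simp add: UNIV_option_conv sum.reindex)

lemma sum_sum_UNIV:
  fixes f :: "('a::finite + 'b::finite) \<Rightarrow> 'c::comm_monoid_add"
  shows "sum f UNIV = (\<Sum>a\<in>UNIV. f (Inl a)) + (\<Sum>b\<in>UNIV. f (Inr b))"
  by (subst UNIV_sum, subst sum.union_disjoint) (auto simp: sum.reindex)

definition hA :: "real^'d::finite^'d \<Rightarrow> real^'d \<Rightarrow> real^('d option)^('d option)" where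
  "hA R t = (\<chi> i j. case i of None \<Rightarrow> (case j of None \<Rightarrow> 1 | Some _ \<Rightarrow> 0)
       | Some a \<Rightarrow> (case j of None \<Rightarrow> t $ a | Some b \<Rightarrow> R $ a $ b))"

definition hAi :: "real^'d::finite^'d \<Rightarrow> real^'d \<Rightarrow> real^('d option)^('d option)" where
  "hAi R t = (\<chi> i j. case i of None \<Rightarrow> (case j of None \<Rightarrow> 1 | Some _ \<Rightarrow> 0)
       | Some a \<Rightarrow> (case j of None \<Rightarrow> - ((transpose R *v t) $ a) | Some b \<Rightarrow> R $ b $ a))"

lemma hA_inv:
  fixes R :: "real^'d::finite^'d"
  assumes "orthogonal_matrix R"
  shows "hA R t ** hAi R t = mat 1" "hAi R t ** hA R t = mat 1"
proof -
  have o1: "R ** transpose R = mat 1" "transpose R ** R = mat 1"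
    using assms orthogonal_matrix_def by auto
  have e1: "(\<Sum>c\<in>UNIV. R $ a $ c * R $ b $ c) = mat 1 $ a $ b" for a b
    using o1(1) by (simp add: matrix_matrix_mult_def transpose_def vec_eq_iff)
  have e2: "(\<Sum>c\<in>UNIV. R $ c $ a * R $ c $ b) = mat 1 $ a $ b" for a b
    using o1(2) by (simp add: matrix_matrix_mult_def transpose_def vec_eq_iff)
  have e3: "(\<Sum>c\<in>UNIV. R $ a $ c * (transpose R *v t) $ c) = t $ a" for a
  proof -
    have "(\<Sum>c\<in>UNIV. R $ a $ c * (transpose R *v t) $ c) = (R *v (transpose R *v t)) $ a"
      by (simp add: matrix_vector_mult_def)
    also have "\<dots> = t $ a" by (simp only: matrix_vector_mul_assoc o1 matrix_vector_mul_lid)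
    finally show ?thesis .
  qed
  have tv: "transpose R *v t = t v* R" by simp
  have e3': "t $ a + (\<Sum>c\<in>UNIV. - (R $ a $ c * (t v* R) $ c)) = 0" for a
    using e3[of a] by (simp add: sum_negf tv)
  have e4: "(\<Sum>c\<in>UNIV. R $ c $ a * t $ c) = (transpose R *v t) $ a" for a
    by (simp add: matrix_vector_mult_def transpose_def)
  show "hA R t ** hAi R t = mat 1"
    unfolding vec_eq_iff
    apply (simp add: matrix_matrix_mult_def hA_def hAi_def sum_option_UNIV)
    apply (auto split: option.splits simp: mat_def e1[unfolded mat_def] e3')
    done
  show "hAi R t ** hA R t = mat 1"
    unfolding vec_eq_iff
    apply (simp add: matrix_matrix_mult_def hA_def hAi_def sum_option_UNIV)
    apply (auto split: option.splits simp: mat_def e2[unfolded mat_def] e4)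
    done
qed

lemma orth_norm:
  fixes R :: "real^'d::finite^'d"
  assumes "orthogonal_matrix R"
  shows "norm (R *v x) = norm x"
proof -
  have "orthogonal_transformation ((*v) R)"
    using assms by (simp add: orthogonal_transformation_matrix matrix_of_matrix_vector_mul)
  thus ?thesis by (simp add: orthogonal_transformation_norm)
qed

lemma K_rigid:
  fixes c :: "'l::finite \<Rightarrow> real^'d::finite" and R :: "real^'d^'d"
  assumes "orthogonal_matrix R"
  shows "tps_K (\<lambda>j. R *v c j + t) lam = tps_K c lam"
proof -
  have h: "norm (R *v c j + t - (R *v c k + t)) = norm (c j - c k)" for j k
    using orth_norm[OF assms, of "c j - c k"] by (simp add: matrix_vector_mult_diff_distrib)
  show ?thesis unfolding tps_K_def by (simp only: h)
qed

lemma Ctil_rigid: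
  fixes c :: "'l::finite \<Rightarrow> real^'d::finite" and R :: "real^'d^'d"
  shows "tps_Ctil (\<lambda>j. R *v c j + t) = hA R t ** tps_Ctil c"
  unfolding vec_eq_iff
  by (auto simp: tps_Ctil_def hA_def matrix_matrix_mult_def sum_option_UNIV matrix_vector_mult_def
       split: option.splits)

lemma Ebar_Elow_rigid:
  fixes c :: "'l::finite \<Rightarrow> real^'d::finite" and R :: "real^'d^'d"
  assumes R: "orthogonal_matrix R"
    and M_inv: "invertible (tps_Ctil c ** matrix_inv (tps_K c lam) ** transpose (tps_Ctil c))"
  shows "tps_Ebar (\<lambda>j. R *v c j + t) lam = tps_Ebar c lam"
    "tps_Elow (\<lambda>j. R *v c j + t) lam = transpose (hAi R t) ** tps_Elow c lam"
proof -
  let ?A = "hA R t" let ?Ai = "hAi R t"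
  define Ki where "Ki = matrix_inv (tps_K c lam)"
  define Ct where "Ct = tps_Ctil c"
  define M where "M = Ct ** Ki ** transpose Ct"
  note AA = hA_inv[OF R, of t]
  have t1: "transpose ?A ** transpose ?Ai = mat 1"
    by (metis AA(2) matrix_transpose_mul transpose_mat)
  have Minv: "invertible M" using M_inv by (simp add: M_def Ki_def Ct_def)
  have M': "(?A ** Ct) ** Ki ** transpose (?A ** Ct) = ?A ** M ** transpose ?A"
    by (simp add: M_def matrix_transpose_mul matrix_mul_assoc)
  have MI: "matrix_inv ((?A ** Ct) ** Ki ** transpose (?A ** Ct)) = transpose ?Ai ** matrix_inv M ** ?Ai"
    unfolding M' by (rule minv_conj[OF Minv AA])
  have "Ki ** transpose (?A ** Ct) ** (transpose ?Ai ** matrix_inv M ** ?Ai) ** (?A ** Ct) ** Ki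
     = Ki ** transpose Ct ** (transpose ?A ** transpose ?Ai) ** matrix_inv M ** (?Ai ** ?A) ** Ct ** Ki"
    by (simp add: matrix_transpose_mul matrix_mul_assoc)
  also have "\<dots> = Ki ** transpose Ct ** matrix_inv M ** Ct ** Ki"
    by (simp add: t1 AA)
  finally have X: "Ki ** transpose (?A ** Ct) ** (transpose ?Ai ** matrix_inv M ** ?Ai) ** (?A ** Ct) ** Ki
     = Ki ** transpose Ct ** matrix_inv M ** Ct ** Ki" .
  show "tps_Ebar (\<lambda>j. R *v c j + t) lam = tps_Ebar c lam"
    unfolding tps_Ebar_def Let_def K_rigid[OF R] Ctil_rigid Ki_def[symmetric] Ct_def[symmetric]
    unfolding MI X by (simp add: M_def)
  have "(transpose ?Ai ** matrix_inv M ** ?Ai) ** (?A ** Ct) ** Ki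
     = transpose ?Ai ** matrix_inv M ** (?Ai ** ?A) ** Ct ** Ki"
    by (simp add: matrix_mul_assoc)
  also have "\<dots> = transpose ?Ai ** (matrix_inv M ** Ct ** Ki)"
    by (simp add: AA matrix_mul_assoc)
  finally have Y: "(transpose ?Ai ** matrix_inv M ** ?Ai) ** (?A ** Ct) ** Ki
     = transpose ?Ai ** (matrix_inv M ** Ct ** Ki)" .
  show "tps_Elow (\<lambda>j. R *v c j + t) lam = transpose (hAi R t) ** tps_Elow c lam"
    unfolding tps_Elow_def Let_def K_rigid[OF R] Ctil_rigid Ki_def[symmetric] Ct_def[symmetric]
    unfolding MI Y by (simp add: M_def)
qed

definition ptil :: "real^'d::finite \<Rightarrow> real^('d option)" where
  "ptil p = (\<chi> i. case i of None \<Rightarrow> 1 | Some a \<Rightarrow> p $ a)"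

definition phiv :: "('l::finite \<Rightarrow> real^'d::finite) \<Rightarrow> real^'d \<Rightarrow> real^'l" where
  "phiv c p = (\<chi> j. tps_phi CARD('d) (norm (p - c j)))"

lemma beta_split:
  "tps_beta c lam p = transpose (tps_Ebar c lam) *v phiv c p + transpose (tps_Elow c lam) *v ptil p"
  unfolding vec_eq_iff
  by (auto simp: tps_beta_def matrix_vector_mult_def transpose_def sum_sum_UNIV tps_E_def phiv_def ptil_def
      intro!: sum.cong split: option.splits)

lemma column_rigid:
  fixes D :: "real^'m::finite^'d::finite"
  shows "column k (R ** D + (\<chi> i k. t $ i)) = R *v column k D + t"
  unfolding vec_eq_iff
  by (simp add: column_def matrix_matrix_mult_def matrix_vector_mult_def)

lemma ptil_rigid: "ptil (R *v p + t) = hA R t *v ptil p"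
  unfolding vec_eq_iff
  by (auto simp: ptil_def hA_def matrix_vector_mult_def sum_option_UNIV split: option.splits)

lemma phiv_rigid:
  fixes R :: "real^'d::finite^'d"
  assumes "orthogonal_matrix R"
  shows "phiv (\<lambda>j. R *v c j + t) (R *v p + t) = phiv c p"
proof -
  have h: "norm (R *v p + t - (R *v c j + t)) = norm (p - c j)" for j
    using orth_norm[OF assms, of "p - c j"] by (simp add: matrix_vector_mult_diff_distrib)
  show ?thesis unfolding phiv_def by (simp only: h)
qed

theorem proposition9:
  fixes c :: "'l::finite \<Rightarrow> real^'d::finite"
    and lam :: real
    and D :: "real^'m::finite^'d"
    and R :: "real^'d^'d"
    and t :: "real^'d"
  assumes dim: "CARD('d) = 2 \<or> CARD('d) = 3"
    and K_inv: "invertible (tps_K c lam)"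
    and M_inv: "invertible (tps_Ctil c ** matrix_inv (tps_K c lam) ** transpose (tps_Ctil c))"
    and rot: "orthogonal_matrix R" "det R = 1"
  shows "tps_B (\<lambda>j. R *v c j + t) lam (R ** D + (\<chi> i k. t $ i)) = tps_B c lam D
       \<and> tps_Z (\<lambda>j. R *v c j + t) lam = tps_Z c lam"
proof
  note EE = Ebar_Elow_rigid[OF rot(1) M_inv, of t]
  note AA = hA_inv[OF rot(1), of t]
  have b: "tps_beta (\<lambda>j. R *v c j + t) lam (R *v p + t) = tps_beta c lam p" for p
  proof -
    have "transpose (transpose (hAi R t) ** tps_Elow c lam) *v (hA R t *v ptil p)
        = transpose (tps_Elow c lam) *v ((hAi R t ** hA R t) *v ptil p)"
      by (simp add: matrix_transpose_mul matrix_vector_mul_assoc matrix_mul_assoc)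
    also have "\<dots> = transpose (tps_Elow c lam) *v ptil p" by (simp add: AA)
    finally show ?thesis
      unfolding beta_split EE phiv_rigid[OF rot(1)] ptil_rigid by simp
  qed
  show "tps_B (\<lambda>j. R *v c j + t) lam (R ** D + (\<chi> i k. t $ i)) = tps_B c lam D"
    unfolding tps_B_def column_rigid b ..
  show "tps_Z (\<lambda>j. R *v c j + t) lam = tps_Z c lam"
    unfolding tps_Z_def EE ..
qed

end
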